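(* Let $0<\alpha<1$, $\lambda>0$, and let $\{M_{\alpha,\lambda}(t)\}_{t\ge0}$ be a Lévy process whose marginals have Laplace transform $\mathbb{E}\, e^{-uM_{\alpha,\lambda}(t)}=\left(\frac{\lambda}{\lambda+u^{\alpha}}\right)^{t}$ for $u\ge 0$. Then for $t>0$ and $0<q<\alpha$, $$\mathbb{E}\big(M_{\alpha,\lambda}(t)^q\big)=\frac{t}{\lambda^{q/\alpha}\,\Gamma(1-q)}\,B\!\left(1-\frac{q}{\alpha},\,t+\frac{q}{\alpha}\right),$$ where $B$ is the Beta function. *)

theory Defs
  imports "HOL-Probability.Probability"
begin

definition levy_process :: "'a measure \<Rightarrow> (real \<Rightarrow> 'a \<Rightarrow> real) \<Rightarrow> bool" where
  "levy_process M X \<longleftrightarrow>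
     prob_space M \<and>
     (\<forall>t\<ge>0. X t \<in> borel_measurable M) \<and>
     (AE \<omega> in M. X 0 \<omega> = 0) \<and>
     (\<forall>n::nat. \<forall>ts::nat \<Rightarrow> real. 0 \<le> ts 0 \<and> strict_mono_on {..n} ts \<longrightarrow>
        prob_space.indep_vars M (\<lambda>_. borel) (\<lambda>i \<omega>. X (ts (Suc i)) \<omega> - X (ts i) \<omega>) {..<n}) \<and>
     (\<forall>s\<ge>0. \<forall>t\<ge>0. distr M borel (\<lambda>\<omega>. X (s + t) \<omega> - X s \<omega>) = distr M borel (X t)) \<and>
     (\<forall>t\<ge>0. \<forall>\<epsilon>>0.
        ((\<lambda>s. measure M {\<omega> \<in> space M. \<bar>X s \<omega> - X t \<omega>\<bar> > \<epsilon>}) \<longlongrightarrow> 0)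
          (at t within {0..})) \<and>
     (AE \<omega> in M. \<forall>t\<ge>0. continuous (at_right t) (\<lambda>s. X s \<omega>) \<and>
                          (t > 0 \<longrightarrow> (\<exists>l. ((\<lambda>s. X s \<omega>) \<longlongrightarrow> l) (at_left t))))"

end

theory Submission
  imports Defs
begin

lemma gamma_nn:
  fixes a c :: real assumes a: "a > 0" and c: "c > 0"
  shows "(\<integral>\<^sup>+y. ennreal (if y > 0 then y powr (a-1) * exp (-(c*y)) else 0) \<partial>lborel) = ennreal (Gamma a * c powr (-a))"
proof -
  have "ennreal (Gamma a) = (\<integral>\<^sup>+t. ennreal (if t > 0 then t powr (a-1) * exp (-t) else 0) \<partial>lborel)"
    using Gamma_conv_nn_integral_real[OF a]
    by (auto intro!: nn_integral_cong simp: indicator_def exp_minus field_simps)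
  also have "\<dots> = ennreal c * (\<integral>\<^sup>+x. ennreal (if c*x > 0 then (c*x) powr (a-1) * exp (-(c*x)) else 0) \<partial>lborel)"
    using c nn_integral_real_affine[where c=c and t=0 and f="\<lambda>t. ennreal (if t > 0 then t powr (a-1) * exp (-t) else 0)"] unfolding add_0_left by simp
  also have "(\<integral>\<^sup>+x. ennreal (if c*x > 0 then (c*x) powr (a-1) * exp (-(c*x)) else 0) \<partial>lborel)
     = (\<integral>\<^sup>+x. ennreal (c powr (a-1)) * ennreal (if x > 0 then x powr (a-1) * exp (-(c*x)) else 0) \<partial>lborel)"
    using c by (intro nn_integral_cong) (auto simp: powr_mult zero_less_mult_iff ennreal_mult'' [symmetric])
  also have "\<dots> = ennreal (c powr (a-1)) * (\<integral>\<^sup>+x. ennreal (if x > 0 then x powr (a-1) * exp (-(c*x)) else 0) \<partial>lborel)"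
    by (rule nn_integral_cmult) measurable
  finally have "ennreal (Gamma a) = ennreal (c * c powr (a-1)) * (\<integral>\<^sup>+x. ennreal (if x > 0 then x powr (a-1) * exp (-(c*x)) else 0) \<partial>lborel)"
    using c by (simp add: ennreal_mult mult.assoc)
  also have "c * c powr (a-1) = c powr a" using c by (simp add: powr_diff)
  finally have E: "ennreal (Gamma a) = ennreal (c powr a) * (\<integral>\<^sup>+x. ennreal (if x > 0 then x powr (a-1) * exp (-(c*x)) else 0) \<partial>lborel)" .
  have "ennreal (c powr (-a)) * ennreal (Gamma a) = (\<integral>\<^sup>+x. ennreal (if x > 0 then x powr (a-1) * exp (-(c*x)) else 0) \<partial>lborel)"
    unfolding E using c by (simp add: mult.assoc[symmetric] ennreal_mult[symmetric] powr_minus)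
  thus ?thesis using c a by (simp add: ennreal_mult mult.commute Gamma_real_pos less_imp_le)
qed


lemma powr_from0_nn:
  fixes b x :: real assumes b: "b > 0" and x: "x \<ge> 0"
  shows "(\<integral>\<^sup>+y. ennreal (if 0 < y \<and> y \<le> x then y powr (b-1) else 0) \<partial>lborel) = ennreal (x powr b / b)"
proof -
  have "((\<lambda>y. y powr (b-1)) has_integral (x powr (b-1+1) / (b-1+1))) {0..x}"
    using b x by (intro has_integral_powr_from_0) auto
  hence "(\<integral>\<^sup>+y. ennreal (indicator {0..x} y * y powr (b-1)) \<partial>lborel) = ennreal (x powr b / b)"
    by (subst nn_integral_has_integral_lebesgue) auto
  moreover have "(\<integral>\<^sup>+y. ennreal (indicator {0..x} y * y powr (b-1)) \<partial>lborel) = (\<integral>\<^sup>+y. ennreal (if 0 < y \<and> y \<le> x then y powr (b-1) else 0) \<partial>lborel)"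
    by (intro nn_integral_cong) (auto simp: indicator_def)
  ultimately show ?thesis by simp
qed

lemma powr_toinf_nn:
  fixes b x :: real assumes b: "b > 0" and x: "x > 0"
  shows "(\<integral>\<^sup>+u. ennreal (if x \<le> u then u powr (-b-1) else 0) \<partial>lborel) = ennreal (x powr (-b) / b)"
proof -
  have "((\<lambda>y. y powr (-b-1)) has_integral (-(x powr (-b-1+1)) / (-b-1+1))) {x..}"
    using b x by (intro has_integral_powr_to_inf) auto
  hence "(\<integral>\<^sup>+y. ennreal (indicator {x..} y * y powr (-b-1)) \<partial>lborel) = ennreal (x powr (-b) / b)"
    by (subst nn_integral_has_integral_lebesgue) auto
  moreover have "(\<integral>\<^sup>+y. ennreal (indicator {x..} y * y powr (-b-1)) \<partial>lborel) = (\<integral>\<^sup>+y. ennreal (if x \<le> y then y powr (-b-1) else 0) \<partial>lborel)"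
    by (intro nn_integral_cong) (auto simp: indicator_def)
  ultimately show ?thesis by simp
qed

lemma exp_ftc_nn:
  fixes u x :: real assumes u: "u \<ge> 0" and x: "x \<ge> 0"
  shows "(\<integral>\<^sup>+y. ennreal (if 0 < y \<and> y \<le> x then u * exp (-(u*y)) else 0) \<partial>lborel) = ennreal (1 - exp (-(u*x)))"
proof -
  have "((\<lambda>y. u * exp (-(u*y))) has_integral ((- exp (-(u*x))) - (- exp (-(u*0))))) {0..x}"
    using x by (intro fundamental_theorem_of_calculus)
       (auto intro!: derivative_eq_intros simp flip: has_real_derivative_iff_has_vector_derivative)
  hence "(\<integral>\<^sup>+y. ennreal (indicator {0..x} y * (u * exp (-(u*y)))) \<partial>lborel) = ennreal (1 - exp (-(u*x)))"
    using u by (subst nn_integral_has_integral_lebesgue) auto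
  moreover have "(\<integral>\<^sup>+y. ennreal (indicator {0..x} y * (u * exp (-(u*y)))) \<partial>lborel) = (\<integral>\<^sup>+y. ennreal (if 0 < y \<and> y \<le> x then u * exp (-(u*y)) else 0) \<partial>lborel)"
    by (intro nn_integral_cong_AE, rule AE_mp[OF AE_lborel_singleton[of 0]]) (auto simp: indicator_def)
  ultimately show ?thesis by simp
qed


lemma R1:
  fixes q x :: real assumes q: "0 < q" "q < 1" and x: "x \<ge> 0"
  shows "(\<integral>\<^sup>+u. ennreal (if u > 0 then u powr (-q-1) * (1 - exp (-(u*x))) else 0) \<partial>lborel)
         = ennreal (Gamma (1-q) * x powr q / q)"
proof (cases "x = 0")
  case True show ?thesis unfolding True by (subst nn_integral_cong[where v="\<lambda>_. 0"]) auto
next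
  case False
  hence x: "x > 0" using x by simp
  have "(\<integral>\<^sup>+u. ennreal (if u > 0 then u powr (-q-1) * (1 - exp (-(u*x))) else 0) \<partial>lborel)
     = (\<integral>\<^sup>+u. ennreal (if u > 0 then u powr (-q-1) else 0) *
          (\<integral>\<^sup>+y. ennreal (if 0 < y \<and> y \<le> x then u * exp (-(u*y)) else 0) \<partial>lborel) \<partial>lborel)"
  proof (intro nn_integral_cong)
    fix u :: real
    show "ennreal (if u > 0 then u powr (-q-1) * (1 - exp (-(u*x))) else 0) =
      ennreal (if u > 0 then u powr (-q-1) else 0) *
          (\<integral>\<^sup>+y. ennreal (if 0 < y \<and> y \<le> x then u * exp (-(u*y)) else 0) \<partial>lborel)"
    proof (cases "u > 0")
      case True
      thus ?thesis using x by (simp add: exp_ftc_nn ennreal_mult)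
    qed simp
  qed
  also have "\<dots> = (\<integral>\<^sup>+u. \<integral>\<^sup>+y. ennreal (if u > 0 then u powr (-q-1) else 0) *
          ennreal (if 0 < y \<and> y \<le> x then u * exp (-(u*y)) else 0) \<partial>lborel \<partial>lborel)"
    by (intro nn_integral_cong nn_integral_cmult[symmetric]) measurable
  also have "\<dots> = (\<integral>\<^sup>+y. \<integral>\<^sup>+u. ennreal (if u > 0 then u powr (-q-1) else 0) *
          ennreal (if 0 < y \<and> y \<le> x then u * exp (-(u*y)) else 0) \<partial>lborel \<partial>lborel)"
    by (rule lborel_pair.Fubini'[symmetric]) measurable
  also have "\<dots> = (\<integral>\<^sup>+y. ennreal (if 0 < y \<and> y \<le> x then 1 else 0) *
          (\<integral>\<^sup>+u. ennreal (if u > 0 then u powr ((1-q)-1) * exp (-(y*u)) else 0) \<partial>lborel) \<partial>lborel)"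
  proof (intro nn_integral_cong)
    fix y :: real
    have "(\<integral>\<^sup>+u. ennreal (if u > 0 then u powr (-q-1) else 0) *
          ennreal (if 0 < y \<and> y \<le> x then u * exp (-(u*y)) else 0) \<partial>lborel) =
          (\<integral>\<^sup>+u. ennreal (if 0 < y \<and> y \<le> x then 1 else 0) *
          ennreal (if u > 0 then u powr ((1-q)-1) * exp (-(y*u)) else 0) \<partial>lborel)"
    proof (intro nn_integral_cong)
      fix u :: real
      have "u > 0 \<Longrightarrow> u powr (-q-1) * u = u powr (-q)"
        by (simp add: powr_diff)
      thus "ennreal (if u > 0 then u powr (-q-1) else 0) *
          ennreal (if 0 < y \<and> y \<le> x then u * exp (-(u*y)) else 0) =
          ennreal (if 0 < y \<and> y \<le> x then 1 else 0) *
          ennreal (if u > 0 then u powr ((1-q)-1) * exp (-(y*u)) else 0)"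
        by (auto simp: ennreal_mult''[symmetric] mult.assoc[symmetric] mult.commute)
    qed
    also have "\<dots> = ennreal (if 0 < y \<and> y \<le> x then 1 else 0) *
          (\<integral>\<^sup>+u. ennreal (if u > 0 then u powr ((1-q)-1) * exp (-(y*u)) else 0) \<partial>lborel)"
      by (rule nn_integral_cmult) measurable
    finally show "(\<integral>\<^sup>+u. ennreal (if u > 0 then u powr (-q-1) else 0) *
          ennreal (if 0 < y \<and> y \<le> x then u * exp (-(u*y)) else 0) \<partial>lborel) = ennreal (if 0 < y \<and> y \<le> x then 1 else 0) *
          (\<integral>\<^sup>+u. ennreal (if u > 0 then u powr ((1-q)-1) * exp (-(y*u)) else 0) \<partial>lborel)" .
  qed
  also have "\<dots> = (\<integral>\<^sup>+y. ennreal (Gamma (1-q)) * ennreal (if 0 < y \<and> y \<le> x then y powr (q-1) else 0) \<partial>lborel)"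
  proof (intro nn_integral_cong)
    fix y :: real
    show "ennreal (if 0 < y \<and> y \<le> x then 1 else 0) *
          (\<integral>\<^sup>+u. ennreal (if u > 0 then u powr ((1-q)-1) * exp (-(y*u)) else 0) \<partial>lborel) =
          ennreal (Gamma (1-q)) * ennreal (if 0 < y \<and> y \<le> x then y powr (q-1) else 0)"
    proof (cases "0 < y \<and> y \<le> x")
      case True
      thus ?thesis using q by (simp add: gamma_nn ennreal_mult Gamma_real_pos less_imp_le)
    qed auto
  qed
  also have "\<dots> = ennreal (Gamma (1-q)) * ennreal (x powr q / q)"
    using q x by (subst nn_integral_cmult) (auto simp: powr_from0_nn)
  finally show ?thesis using q by (simp add: ennreal_mult[symmetric] Gamma_real_pos less_imp_le)
qed


lemma R3:
  fixes t c :: real assumes t: "t > 0" and c: "c \<ge> 0"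
  shows "(\<integral>\<^sup>+s. ennreal (if s > 0 then s powr (t-1) * exp (-s) * (1 - exp (-(c * s))) else 0) \<partial>lborel)
         = ennreal (Gamma t * (1 - (1+c) powr (-t)))"
proof -
  have "ennreal (Gamma t * 1 powr (-t)) = (\<integral>\<^sup>+s. ennreal (if s > 0 then s powr (t-1) * exp (-(1 * s)) else 0) \<partial>lborel)"
    using gamma_nn[OF t, of 1] by simp
  also have "\<dots> = (\<integral>\<^sup>+s. ennreal (if s > 0 then s powr (t-1) * exp (-((1+c) * s)) else 0)
       + ennreal (if s > 0 then s powr (t-1) * exp (-s) * (1 - exp (-(c * s))) else 0) \<partial>lborel)"
  proof (intro nn_integral_cong)
    fix s :: real
    have "s > 0 \<Longrightarrow> s powr (t-1) * exp (-(1 * s)) = s powr (t-1) * exp (-((1+c) * s)) + s powr (t-1) * exp (-s) * (1 - exp (-(c * s)))"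
      by (simp add: algebra_simps exp_add[symmetric])
    moreover have "s > 0 \<Longrightarrow> 0 \<le> s powr (t-1) * exp (-s) * (1 - exp (-(c * s)))"
      using c by (intro mult_nonneg_nonneg) auto
    ultimately show "ennreal (if s > 0 then s powr (t-1) * exp (-(1 * s)) else 0) =
      ennreal (if s > 0 then s powr (t-1) * exp (-((1+c) * s)) else 0)
       + ennreal (if s > 0 then s powr (t-1) * exp (-s) * (1 - exp (-(c * s))) else 0)"
      by (auto simp: ennreal_plus[symmetric] simp del: ennreal_plus)
  qed
  also have "\<dots> = ennreal (Gamma t * (1+c) powr (-t)) +
      (\<integral>\<^sup>+s. ennreal (if s > 0 then s powr (t-1) * exp (-s) * (1 - exp (-(c * s))) else 0) \<partial>lborel)"
    using c by (subst nn_integral_add) (auto simp: gamma_nn[OF t])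
  finally have E: "ennreal (Gamma t) = ennreal (Gamma t * (1+c) powr (-t)) +
      (\<integral>\<^sup>+s. ennreal (if s > 0 then s powr (t-1) * exp (-s) * (1 - exp (-(c * s))) else 0) \<partial>lborel)" by simp
  have "(\<integral>\<^sup>+s. ennreal (if s > 0 then s powr (t-1) * exp (-s) * (1 - exp (-(c * s))) else 0) \<partial>lborel)
     = ennreal (Gamma t) - ennreal (Gamma t * (1+c) powr (-t))"
    unfolding E by (simp add: ennreal_add_diff_cancel_left)
  also have "\<dots> = ennreal (Gamma t * (1 - (1+c) powr (-t)))"
    using t c by (subst ennreal_minus) (auto simp: Gamma_real_pos less_imp_le algebra_simps)
  finally show ?thesis .
qed

lemma powr_le_iff_root:
  fixes y u a :: real assumes "y > 0" "u > 0" "a > 0"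
  shows "y \<le> u powr a \<longleftrightarrow> y powr (1/a) \<le> u"
proof
  assume "y \<le> u powr a"
  hence "y powr (1/a) \<le> (u powr a) powr (1/a)" using assms by (intro powr_mono2) auto
  thus "y powr (1/a) \<le> u" using assms by (simp add: powr_powr)
next
  assume "y powr (1/a) \<le> u"
  hence "(y powr (1/a)) powr a \<le> u powr a" using assms by (intro powr_mono2) auto
  thus "y \<le> u powr a" using assms by (simp add: powr_powr)
qed

lemma R4:
  fixes c q \<alpha> :: real assumes c: "c > 0" and q: "0 < q" "q < \<alpha>" and a: "\<alpha> < 1"
  shows "(\<integral>\<^sup>+u. ennreal (if u > 0 then u powr (-q-1) * (1 - exp (-(c * u powr \<alpha>))) else 0) \<partial>lborel)
         = ennreal (c powr (q/\<alpha>) * Gamma (1 - q/\<alpha>) / q)"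
proof -
  have al: "\<alpha> > 0" using q by simp
  have "(\<integral>\<^sup>+u. ennreal (if u > 0 then u powr (-q-1) * (1 - exp (-(c * u powr \<alpha>))) else 0) \<partial>lborel)
     = (\<integral>\<^sup>+u. ennreal (if u > 0 then u powr (-q-1) else 0) *
          (\<integral>\<^sup>+y. ennreal (if 0 < y \<and> y \<le> u powr \<alpha> then c * exp (-(c*y)) else 0) \<partial>lborel) \<partial>lborel)"
  proof (intro nn_integral_cong)
    fix u :: real
    show "ennreal (if u > 0 then u powr (-q-1) * (1 - exp (-(c * u powr \<alpha>))) else 0) =
      ennreal (if u > 0 then u powr (-q-1) else 0) *
          (\<integral>\<^sup>+y. ennreal (if 0 < y \<and> y \<le> u powr \<alpha> then c * exp (-(c*y)) else 0) \<partial>lborel)"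
    proof (cases "u > 0")
      case True
      thus ?thesis using c by (simp add: exp_ftc_nn ennreal_mult)
    qed simp
  qed
  also have "\<dots> = (\<integral>\<^sup>+u. \<integral>\<^sup>+y. ennreal (if u > 0 then u powr (-q-1) else 0) *
          ennreal (if 0 < y \<and> y \<le> u powr \<alpha> then c * exp (-(c*y)) else 0) \<partial>lborel \<partial>lborel)"
    by (intro nn_integral_cong nn_integral_cmult[symmetric]) measurable
  also have "\<dots> = (\<integral>\<^sup>+y. \<integral>\<^sup>+u. ennreal (if u > 0 then u powr (-q-1) else 0) *
          ennreal (if 0 < y \<and> y \<le> u powr \<alpha> then c * exp (-(c*y)) else 0) \<partial>lborel \<partial>lborel)"
    by (rule lborel_pair.Fubini'[symmetric]) measurable
  also have "\<dots> = (\<integral>\<^sup>+y. ennreal (if y > 0 then c * exp (-(c*y)) else 0) *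
          (\<integral>\<^sup>+u. ennreal (if y powr (1/\<alpha>) \<le> u then u powr (-q-1) else 0) \<partial>lborel) \<partial>lborel)"
  proof (intro nn_integral_cong)
    fix y :: real
    have "(\<integral>\<^sup>+u. ennreal (if u > 0 then u powr (-q-1) else 0) *
          ennreal (if 0 < y \<and> y \<le> u powr \<alpha> then c * exp (-(c*y)) else 0) \<partial>lborel) =
          (\<integral>\<^sup>+u. ennreal (if y > 0 then c * exp (-(c*y)) else 0) *
          ennreal (if y powr (1/\<alpha>) \<le> u then u powr (-q-1) else 0) \<partial>lborel)"
    proof (intro nn_integral_cong)
      fix u :: real
      show "ennreal (if u > 0 then u powr (-q-1) else 0) *
          ennreal (if 0 < y \<and> y \<le> u powr \<alpha> then c * exp (-(c*y)) else 0) =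
          ennreal (if y > 0 then c * exp (-(c*y)) else 0) *
          ennreal (if y powr (1/\<alpha>) \<le> u then u powr (-q-1) else 0)"
      proof (cases "y > 0")
        case yp: True
        show ?thesis
        proof (cases "u > 0")
          case True
          thus ?thesis using yp al powr_le_iff_root[OF yp True al] by (auto simp: mult.commute)
        next
          case False
          have "0 < y powr (1/\<alpha>)" using yp by simp
          hence "\<not> y powr (1/\<alpha>) \<le> u" using False by linarith
          thus ?thesis using False by simp
        qed
      qed simp
    qed
    also have "\<dots> = ennreal (if y > 0 then c * exp (-(c*y)) else 0) *
          (\<integral>\<^sup>+u. ennreal (if y powr (1/\<alpha>) \<le> u then u powr (-q-1) else 0) \<partial>lborel)"
      by (rule nn_integral_cmult) measurable
    finally show "(\<integral>\<^sup>+u. ennreal (if u > 0 then u powr (-q-1) else 0) *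
          ennreal (if 0 < y \<and> y \<le> u powr \<alpha> then c * exp (-(c*y)) else 0) \<partial>lborel) =
          ennreal (if y > 0 then c * exp (-(c*y)) else 0) *
          (\<integral>\<^sup>+u. ennreal (if y powr (1/\<alpha>) \<le> u then u powr (-q-1) else 0) \<partial>lborel)" .
  qed
  also have "\<dots> = (\<integral>\<^sup>+y. ennreal (c / q) * ennreal (if y > 0 then y powr ((1 - q/\<alpha>) - 1) * exp (-(c*y)) else 0) \<partial>lborel)"
  proof (intro nn_integral_cong)
    fix y :: real
    show "ennreal (if y > 0 then c * exp (-(c*y)) else 0) *
          (\<integral>\<^sup>+u. ennreal (if y powr (1/\<alpha>) \<le> u then u powr (-q-1) else 0) \<partial>lborel) =
          ennreal (c / q) * ennreal (if y > 0 then y powr ((1 - q/\<alpha>) - 1) * exp (-(c*y)) else 0)"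
    proof (cases "y > 0")
      case True
      have "(y powr (1/\<alpha>)) powr (-q) = y powr ((1 - q/\<alpha>) - 1)"
        using True by (simp add: powr_powr)
      thus ?thesis using True q c
        by (simp add: powr_toinf_nn ennreal_mult''[symmetric] ennreal_mult[symmetric])
    qed simp
  qed
  also have "\<dots> = ennreal (c / q) * ennreal (Gamma (1 - q/\<alpha>) * c powr (-(1 - q/\<alpha>)))"
    using q a al c by (subst nn_integral_cmult) (auto simp: gamma_nn field_simps)
  also have "\<dots> = ennreal (c powr (q/\<alpha>) * Gamma (1 - q/\<alpha>) / q)"
  proof -
    have "c / q * (Gamma (1 - q/\<alpha>) * c powr (-(1 - q/\<alpha>))) = c powr (q/\<alpha>) * Gamma (1 - q/\<alpha>) / q"
      using c by (simp add: powr_minus_divide powr_diff field_simps)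
    thus ?thesis using c q by (simp add: ennreal_mult[symmetric])
  qed
  finally show ?thesis .
qed


lemma laplace_rewrite:
  fixes lam v t :: real assumes "lam > 0" "v \<ge> 0"
  shows "(lam / (lam + v)) powr t = (1 + v / lam) powr (-t)"
proof -
  have "lam / (lam + v) = 1 / (1 + v / lam)" using assms by (simp add: field_simps)
  thus ?thesis using assms by (simp add: powr_divide powr_minus_divide)
qed

lemma R5:
  fixes lam t q \<alpha> :: real assumes t: "t > 0" and lam: "lam > 0" and q: "0 < q" "q < \<alpha>" and a: "\<alpha> < 1"
  shows "(\<integral>\<^sup>+u. ennreal (if u > 0 then u powr (-q-1) * (1 - (lam / (lam + u powr \<alpha>)) powr t) else 0) \<partial>lborel)
    = ennreal (lam powr (-(q/\<alpha>)) * Gamma (1 - q/\<alpha>) * Gamma (t + q/\<alpha>) / (q * Gamma t))"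
proof -
  have al: "\<alpha> > 0" using q by simp
  define p where "p = q / \<alpha>"
  have p: "0 < p" "p < 1" using q al by (auto simp: p_def field_simps)
  define J where "J = (\<integral>\<^sup>+u. ennreal (if u > 0 then u powr (-q-1) * (1 - (lam / (lam + u powr \<alpha>)) powr t) else 0) \<partial>lborel)"
  have "ennreal (Gamma t) * J = (\<integral>\<^sup>+u. ennreal (Gamma t) * ennreal (if u > 0 then u powr (-q-1) * (1 - (lam / (lam + u powr \<alpha>)) powr t) else 0) \<partial>lborel)"
    unfolding J_def by (rule nn_integral_cmult[symmetric]) measurable
  also have "\<dots> = (\<integral>\<^sup>+u. ennreal (if u > 0 then u powr (-q-1) else 0) *
     (\<integral>\<^sup>+s. ennreal (if s > 0 then s powr (t-1) * exp (-s) * (1 - exp (-((u powr \<alpha> / lam) * s))) else 0) \<partial>lborel) \<partial>lborel)"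
  proof (intro nn_integral_cong)
    fix u :: real
    show "ennreal (Gamma t) * ennreal (if u > 0 then u powr (-q-1) * (1 - (lam / (lam + u powr \<alpha>)) powr t) else 0) =
      ennreal (if u > 0 then u powr (-q-1) else 0) *
     (\<integral>\<^sup>+s. ennreal (if s > 0 then s powr (t-1) * exp (-s) * (1 - exp (-((u powr \<alpha> / lam) * s))) else 0) \<partial>lborel)"
    proof (cases "u > 0")
      case True
      have ge: "1 \<le> (1 + u powr \<alpha> / lam) powr t"
        using t lam by (intro ge_one_powr_ge_zero) auto
      have le: "(1 + u powr \<alpha> / lam) powr (-t) \<le> 1"
        using ge by (simp add: powr_minus inverse_le_1_iff)
      show ?thesis using True lam t le
        by (simp add: R3 laplace_rewrite ennreal_mult[symmetric] Gamma_real_pos less_imp_le algebra_simps)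
    qed simp
  qed
  also have "\<dots> = (\<integral>\<^sup>+u. \<integral>\<^sup>+s. ennreal (if u > 0 then u powr (-q-1) else 0) *
     ennreal (if s > 0 then s powr (t-1) * exp (-s) * (1 - exp (-((u powr \<alpha> / lam) * s))) else 0) \<partial>lborel \<partial>lborel)"
    by (intro nn_integral_cong nn_integral_cmult[symmetric]) measurable
  also have "\<dots> = (\<integral>\<^sup>+s. \<integral>\<^sup>+u. ennreal (if u > 0 then u powr (-q-1) else 0) *
     ennreal (if s > 0 then s powr (t-1) * exp (-s) * (1 - exp (-((u powr \<alpha> / lam) * s))) else 0) \<partial>lborel \<partial>lborel)"
    by (rule lborel_pair.Fubini'[symmetric]) measurable
  also have "\<dots> = (\<integral>\<^sup>+s. ennreal (if s > 0 then s powr (t-1) * exp (-s) else 0) *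
     (\<integral>\<^sup>+u. ennreal (if u > 0 then u powr (-q-1) * (1 - exp (-((s / lam) * u powr \<alpha>))) else 0) \<partial>lborel) \<partial>lborel)"
  proof (intro nn_integral_cong)
    fix s :: real
    have "(\<integral>\<^sup>+u. ennreal (if u > 0 then u powr (-q-1) else 0) *
     ennreal (if s > 0 then s powr (t-1) * exp (-s) * (1 - exp (-((u powr \<alpha> / lam) * s))) else 0) \<partial>lborel)
      = (\<integral>\<^sup>+u. ennreal (if s > 0 then s powr (t-1) * exp (-s) else 0) *
       ennreal (if u > 0 then u powr (-q-1) * (1 - exp (-((s / lam) * u powr \<alpha>))) else 0) \<partial>lborel)"
    proof (intro nn_integral_cong)
      fix u :: real
      have "(u powr \<alpha> / lam) * s = (s / lam) * u powr \<alpha>" by simp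
      moreover have "u > 0 \<Longrightarrow> s > 0 \<Longrightarrow> 0 \<le> 1 - exp (-((s / lam) * u powr \<alpha>))" using lam by simp
      ultimately show "ennreal (if u > 0 then u powr (-q-1) else 0) *
     ennreal (if s > 0 then s powr (t-1) * exp (-s) * (1 - exp (-((u powr \<alpha> / lam) * s))) else 0)
      = ennreal (if s > 0 then s powr (t-1) * exp (-s) else 0) *
       ennreal (if u > 0 then u powr (-q-1) * (1 - exp (-((s / lam) * u powr \<alpha>))) else 0)"
        by (auto simp: ennreal_mult[symmetric] mult_ac)
    qed
    also have "\<dots> = ennreal (if s > 0 then s powr (t-1) * exp (-s) else 0) *
       (\<integral>\<^sup>+u. ennreal (if u > 0 then u powr (-q-1) * (1 - exp (-((s / lam) * u powr \<alpha>))) else 0) \<partial>lborel)"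
      by (rule nn_integral_cmult) measurable
    finally show "(\<integral>\<^sup>+u. ennreal (if u > 0 then u powr (-q-1) else 0) *
     ennreal (if s > 0 then s powr (t-1) * exp (-s) * (1 - exp (-((u powr \<alpha> / lam) * s))) else 0) \<partial>lborel)
      = ennreal (if s > 0 then s powr (t-1) * exp (-s) else 0) *
       (\<integral>\<^sup>+u. ennreal (if u > 0 then u powr (-q-1) * (1 - exp (-((s / lam) * u powr \<alpha>))) else 0) \<partial>lborel)" .
  qed
  also have "\<dots> = (\<integral>\<^sup>+s. ennreal (lam powr (-p) * Gamma (1 - p) / q) *
      ennreal (if s > 0 then s powr ((t + p) - 1) * exp (-(1 * s)) else 0) \<partial>lborel)"
  proof (intro nn_integral_cong)
    fix s :: real
    show "ennreal (if s > 0 then s powr (t-1) * exp (-s) else 0) *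
     (\<integral>\<^sup>+u. ennreal (if u > 0 then u powr (-q-1) * (1 - exp (-((s / lam) * u powr \<alpha>))) else 0) \<partial>lborel) =
     ennreal (lam powr (-p) * Gamma (1 - p) / q) *
      ennreal (if s > 0 then s powr ((t + p) - 1) * exp (-(1 * s)) else 0)"
    proof (cases "s > 0")
      case True
      have R: "(\<integral>\<^sup>+u. ennreal (if u > 0 then u powr (-q-1) * (1 - exp (-((s / lam) * u powr \<alpha>))) else 0) \<partial>lborel)
        = ennreal ((s / lam) powr p * Gamma (1 - p) / q)"
        unfolding p_def using True lam q a by (intro R4) auto
      have "s powr (t-1) * exp (-s) * ((s / lam) powr p * Gamma (1 - p) / q) =
            lam powr (-p) * Gamma (1 - p) / q * (s powr ((t + p) - 1) * exp (-(1 * s)))"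
        using True lam by (simp add: powr_divide powr_add powr_diff powr_minus_divide field_simps)
      moreover have "0 \<le> (s / lam) powr p * Gamma (1 - p) / q" using p q by (simp add: Gamma_real_pos less_imp_le)
      ultimately show ?thesis using True R p q
        by (simp add: ennreal_mult[symmetric] Gamma_real_pos less_imp_le)
    qed simp
  qed
  also have "\<dots> = ennreal (lam powr (-p) * Gamma (1 - p) / q) * ennreal (Gamma (t + p) * 1 powr (-(t+p)))"
    using t p by (subst nn_integral_cmult) (auto simp: gamma_nn)
  finally have E: "ennreal (Gamma t) * J = ennreal (lam powr (-p) * Gamma (1 - p) * Gamma (t + p) / q)"
    using p q t by (simp add: ennreal_mult[symmetric] Gamma_real_pos less_imp_le)
  have "J = ennreal (inverse (Gamma t)) * (ennreal (Gamma t) * J)"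
    using t Gamma_real_pos[OF t] by (simp add: order.strict_implies_not_eq[OF Gamma_real_pos[OF t], symmetric] mult.assoc[symmetric] ennreal_mult[symmetric] Gamma_real_pos less_imp_le)
  also have "\<dots> = ennreal (lam powr (-(q/\<alpha>)) * Gamma (1 - q/\<alpha>) * Gamma (t + q/\<alpha>) / (q * Gamma t))"
  proof -
    have K: "0 \<le> lam powr (-p) * Gamma (1 - p) * Gamma (t + p) / q"
      using p q t by (simp add: Gamma_real_pos less_imp_le)
    have "inverse (Gamma t) * (lam powr (-p) * Gamma (1 - p) * Gamma (t + p) / q)
       = lam powr (-(q/\<alpha>)) * Gamma (1 - q/\<alpha>) * Gamma (t + q/\<alpha>) / (q * Gamma t)"
      by (simp add: p_def field_simps)
    thus ?thesis unfolding E using t K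
      by (simp add: ennreal_mult[symmetric] Gamma_real_pos less_imp_le del: ennreal_mult')
  qed
  finally show ?thesis unfolding J_def .
qed


theorem mainTheorem5:
  fixes M :: "'a measure" and X :: "real \<Rightarrow> 'a \<Rightarrow> real"
    and \<alpha> lam t q :: real
  assumes "0 < \<alpha>" "\<alpha> < 1" "0 < lam"
    and "levy_process M X"
    and "\<And>s u. s \<ge> 0 \<Longrightarrow> u \<ge> 0 \<Longrightarrow>
           prob_space.expectation M (\<lambda>\<omega>. exp (- u * X s \<omega>)) = (lam / (lam + u powr \<alpha>)) powr s"
    and "0 < t" "0 < q" "q < \<alpha>"
  shows "integrable M (\<lambda>\<omega>. X t \<omega> powr q) \<and>
         prob_space.expectation M (\<lambda>\<omega>. X t \<omega> powr q) =
           t / (lam powr (q / \<alpha>) * Gamma (1 - q)) * Beta (1 - q / \<alpha>) (t + q / \<alpha>)"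
proof -
  note al = assms(1) and a1 = assms(2) and lam = assms(3) and lap = assms(5)
    and t = assms(6) and q = assms(7) and qa = assms(8)
  have P: "prob_space M" using assms(4) unfolding levy_process_def by blast
  interpret prob_space M by (rule P)
  have Xm[measurable]: "X t \<in> borel_measurable M" using assms(4) t unfolding levy_process_def by auto
  define L where "L u = (lam / (lam + u powr \<alpha>)) powr t" for u :: real
  have Lpos: "0 < L u" for u
  proof -
    have "lam + u powr \<alpha> > 0" using lam by (intro add_pos_nonneg) auto
    thus ?thesis using lam by (simp add: L_def)
  qed
  have Lle: "L u \<le> 1" for u
  proof -
    have d: "lam + u powr \<alpha> > 0" using lam by (intro add_pos_nonneg) auto
    have "lam / (lam + u powr \<alpha>) \<le> 1" using d by (simp add: divide_le_eq)
    moreover have "0 \<le> lam / (lam + u powr \<alpha>)" using lam d by simp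
    ultimately show ?thesis unfolding L_def using t by (intro powr_le1) (auto simp del: abs_divide)
  qed
  have lapt: "expectation (\<lambda>\<omega>. exp (- u * X t \<omega>)) = L u" if "u \<ge> 0" for u
    using lap[of t u] t that by (simp add: L_def)
  have intexp: "integrable M (\<lambda>\<omega>. exp (- u * X t \<omega>))" if "u \<ge> 0" for u
  proof (rule ccontr)
    assume "\<not> ?thesis"
    hence "expectation (\<lambda>\<omega>. exp (- u * X t \<omega>)) = 0" by (rule not_integrable_integral_eq)
    thus False using lapt[OF that] Lpos[of u] by simp
  qed
  have negnull: "measure M {\<omega> \<in> space M. X t \<omega> \<le> -e} = 0" if e: "e > 0" for e
  proof (rule ccontr)
    define A where "A = {\<omega> \<in> space M. X t \<omega> \<le> -e}"
    define Pa where "Pa = measure M A"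
    assume "\<not> measure M {\<omega> \<in> space M. X t \<omega> \<le> -e} = 0"
    hence Pa: "Pa > 0" unfolding Pa_def A_def using measure_nonneg[of M] by (simp add: order.not_eq_order_implies_strict)
    have Am: "A \<in> sets M" unfolding A_def by measurable
    define u where "u = 1 / (e * Pa)"
    have u: "u \<ge> 0" using e Pa by (simp add: u_def)
    have "expectation (\<lambda>\<omega>. indicator A \<omega> * exp (u * e)) \<le> expectation (\<lambda>\<omega>. exp (- u * X t \<omega>))"
    proof (rule integral_mono)
      show "integrable M (\<lambda>\<omega>. indicator A \<omega> * exp (u * e))"
        using Am by (intro integrable_mult_left integrable_real_indicator) (auto simp: emeasure_eq_measure)
      show "integrable M (\<lambda>\<omega>. exp (- u * X t \<omega>))" by (rule intexp[OF u])
      fix \<omega> assume "\<omega> \<in> space M"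
      show "indicator A \<omega> * exp (u * e) \<le> exp (- u * X t \<omega>)"
      proof (cases "\<omega> \<in> A")
        case True
        hence "X t \<omega> \<le> -e" unfolding A_def by simp
        hence "u * e \<le> - u * X t \<omega>" using u mult_left_mono[of "X t \<omega>" "-e" u] by simp
        thus ?thesis using True by simp
      qed simp
    qed
    hence "Pa * exp (u * e) \<le> L u" using lapt[OF u] Am by (simp add: Pa_def)
    hence "Pa * (1 + u * e) \<le> 1" using Lle[of u] exp_ge_add_one_self[of "u * e"] Pa
      by (smt (verit, best) mult_left_mono)
    moreover have "Pa * (1 + u * e) = Pa + 1" using Pa e by (simp add: u_def field_simps)
    ultimately show False using Pa by simp
  qed
  have AEnn: "AE \<omega> in M. X t \<omega> \<ge> 0"
  proof -
    have "AE \<omega> in M. X t \<omega> > - inverse (real (Suc n))" for n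
    proof (rule AE_I[where N="{\<omega> \<in> space M. X t \<omega> \<le> - inverse (real (Suc n))}"])
      show "{\<omega> \<in> space M. \<not> - inverse (real (Suc n)) < X t \<omega>} \<subseteq> {\<omega> \<in> space M. X t \<omega> \<le> - inverse (real (Suc n))}" by auto
      show "{\<omega> \<in> space M. X t \<omega> \<le> - inverse (real (Suc n))} \<in> sets M" by measurable
      thus "emeasure M {\<omega> \<in> space M. X t \<omega> \<le> - inverse (real (Suc n))} = 0"
        using negnull[of "inverse (real (Suc n))"] by (simp add: emeasure_eq_measure)
    qed
    hence "AE \<omega> in M. \<forall>n. X t \<omega> > - inverse (real (Suc n))" by (simp add: AE_all_countable)
    thus ?thesis
    proof (rule eventually_mono)
      fix \<omega> assume H: "\<forall>n. X t \<omega> > - inverse (real (Suc n))"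
      show "X t \<omega> \<ge> 0"
      proof (rule ccontr)
        assume "\<not> X t \<omega> \<ge> 0"
        then obtain n where "inverse (real (Suc n)) < - X t \<omega>" using reals_Archimedean[of "- X t \<omega>"] by auto
        thus False using H[rule_format, of n] by simp
      qed
    qed
  qed
  have E1: "(\<integral>\<^sup>+\<omega>. ennreal (1 - exp (- (u * X t \<omega>))) \<partial>M) = ennreal (1 - L u)" if u: "u \<ge> 0" for u
  proof -
    have I: "(\<integral>\<^sup>+\<omega>. ennreal (exp (- (u * X t \<omega>))) \<partial>M) = ennreal (L u)"
      using nn_integral_eq_integral[OF intexp[OF u]] lapt[OF u] by simp
    have "1 = (\<integral>\<^sup>+\<omega>. ennreal 1 \<partial>M)" by (simp add: emeasure_space_1)
    also have "\<dots> = (\<integral>\<^sup>+\<omega>. ennreal (exp (- u * X t \<omega>)) + ennreal (1 - exp (- (u * X t \<omega>))) \<partial>M)"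
    proof (rule nn_integral_cong_AE, rule eventually_mono[OF AEnn])
      fix \<omega> assume "X t \<omega> \<ge> 0"
      hence "exp (- (u * X t \<omega>)) \<le> 1" using u by simp
      thus "ennreal 1 = ennreal (exp (- u * X t \<omega>)) + ennreal (1 - exp (- (u * X t \<omega>)))"
        by (simp add: ennreal_plus[symmetric] del: ennreal_plus)
    qed
    also have "\<dots> = ennreal (L u) + (\<integral>\<^sup>+\<omega>. ennreal (1 - exp (- (u * X t \<omega>))) \<partial>M)"
      by (subst nn_integral_add) (auto simp: I)
    finally have E: "1 = ennreal (L u) + (\<integral>\<^sup>+\<omega>. ennreal (1 - exp (- (u * X t \<omega>))) \<partial>M)" .
    have "(\<integral>\<^sup>+\<omega>. ennreal (1 - exp (- (u * X t \<omega>))) \<partial>M) = 1 - ennreal (L u)"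
      by (subst E) (simp add: ennreal_add_diff_cancel_left)
    also have "\<dots> = ennreal (1 - L u)" using Lpos[of u] by (simp add: ennreal_1[symmetric] ennreal_minus del: ennreal_1)
    finally show ?thesis .
  qed
  interpret PS: pair_sigma_finite M lborel
    by (rule pair_sigma_finite.intro[OF prob_space_imp_sigma_finite[OF P] sigma_finite_lborel])
  define V where "V = lam powr (-(q/\<alpha>)) * Gamma (1 - q/\<alpha>) * Gamma (t + q/\<alpha>) / (q * Gamma t)"
  have q1: "q < 1" using qa a1 by simp
  have "(\<integral>\<^sup>+\<omega>. ennreal (Gamma (1-q) * X t \<omega> powr q / q) \<partial>M)
      = (\<integral>\<^sup>+\<omega>. \<integral>\<^sup>+u. ennreal (if u > 0 then u powr (-q-1) * (1 - exp (-(u * X t \<omega>))) else 0) \<partial>lborel \<partial>M)"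
    by (rule nn_integral_cong_AE, rule eventually_mono[OF AEnn]) (simp add: R1[OF q q1])
  also have "\<dots> = (\<integral>\<^sup>+u. \<integral>\<^sup>+\<omega>. ennreal (if u > 0 then u powr (-q-1) * (1 - exp (-(u * X t \<omega>))) else 0) \<partial>M \<partial>lborel)"
    by (rule PS.Fubini'[symmetric]) measurable
  also have "\<dots> = (\<integral>\<^sup>+u. ennreal (if u > 0 then u powr (-q-1) else 0) * (\<integral>\<^sup>+\<omega>. ennreal (1 - exp (-(u * X t \<omega>))) \<partial>M) \<partial>lborel)"
  proof (intro nn_integral_cong)
    fix u :: real
    have "(\<integral>\<^sup>+\<omega>. ennreal (if u > 0 then u powr (-q-1) * (1 - exp (-(u * X t \<omega>))) else 0) \<partial>M)
       = (\<integral>\<^sup>+\<omega>. ennreal (if u > 0 then u powr (-q-1) else 0) * ennreal (1 - exp (-(u * X t \<omega>))) \<partial>M)"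
      by (intro nn_integral_cong) (auto simp: ennreal_mult')
    also have "\<dots> = ennreal (if u > 0 then u powr (-q-1) else 0) * (\<integral>\<^sup>+\<omega>. ennreal (1 - exp (-(u * X t \<omega>))) \<partial>M)"
      by (rule nn_integral_cmult) measurable
    finally show "(\<integral>\<^sup>+\<omega>. ennreal (if u > 0 then u powr (-q-1) * (1 - exp (-(u * X t \<omega>))) else 0) \<partial>M)
      = ennreal (if u > 0 then u powr (-q-1) else 0) * (\<integral>\<^sup>+\<omega>. ennreal (1 - exp (-(u * X t \<omega>))) \<partial>M)" .
  qed
  also have "\<dots> = (\<integral>\<^sup>+u. ennreal (if u > 0 then u powr (-q-1) * (1 - (lam / (lam + u powr \<alpha>)) powr t) else 0) \<partial>lborel)"
  proof (intro nn_integral_cong)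
    fix u :: real
    show "ennreal (if u > 0 then u powr (-q-1) else 0) * (\<integral>\<^sup>+\<omega>. ennreal (1 - exp (-(u * X t \<omega>))) \<partial>M)
       = ennreal (if u > 0 then u powr (-q-1) * (1 - (lam / (lam + u powr \<alpha>)) powr t) else 0)"
    proof (cases "u > 0")
      case True
      thus ?thesis using E1[of u] by (simp add: ennreal_mult' L_def)
    qed simp
  qed
  also have "\<dots> = ennreal V" unfolding V_def using t lam q qa a1 by (rule R5)
  finally have EQ: "(\<integral>\<^sup>+\<omega>. ennreal (Gamma (1-q) * X t \<omega> powr q / q) \<partial>M) = ennreal V" .
  have G1: "Gamma (1 - q) > 0" using q1 by (simp add: Gamma_real_pos)
  have "(\<integral>\<^sup>+\<omega>. ennreal (X t \<omega> powr q) \<partial>M) = ennreal (q / Gamma (1-q)) * (\<integral>\<^sup>+\<omega>. ennreal (Gamma (1-q) * X t \<omega> powr q / q) \<partial>M)"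
  proof -
    have "(\<integral>\<^sup>+\<omega>. ennreal (X t \<omega> powr q) \<partial>M) = (\<integral>\<^sup>+\<omega>. ennreal (q / Gamma (1-q)) * ennreal (Gamma (1-q) * X t \<omega> powr q / q) \<partial>M)"
      using G1 q by (intro nn_integral_cong) (simp add: ennreal_mult[symmetric])
    also have "\<dots> = ennreal (q / Gamma (1-q)) * (\<integral>\<^sup>+\<omega>. ennreal (Gamma (1-q) * X t \<omega> powr q / q) \<partial>M)"
      by (rule nn_integral_cmult) measurable
    finally show ?thesis .
  qed
  also have "\<dots> = ennreal (q / Gamma (1-q) * V)" unfolding EQ using G1 q by (intro ennreal_mult'[symmetric]) simp
  finally have NN: "(\<integral>\<^sup>+\<omega>. ennreal (X t \<omega> powr q) \<partial>M) = ennreal (q / Gamma (1-q) * V)" .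
  have INT: "integrable M (\<lambda>\<omega>. X t \<omega> powr q)"
    by (rule integrableI_nonneg) (auto simp: NN)
  have "ennreal (expectation (\<lambda>\<omega>. X t \<omega> powr q)) = ennreal (q / Gamma (1-q) * V)"
    using nn_integral_eq_integral[OF INT] NN by simp
  moreover have "0 \<le> q / Gamma (1-q) * V"
  proof -
    have "q / \<alpha> < 1" using qa al by simp
    hence "Gamma (1 - q/\<alpha>) > 0" by (intro Gamma_real_pos) simp
    moreover have "Gamma (t + q/\<alpha>) > 0" using t q al by (intro Gamma_real_pos add_pos_pos divide_pos_pos)
    moreover have "Gamma t > 0" using t by (intro Gamma_real_pos)
    ultimately show ?thesis using G1 q lam unfolding V_def by simp
  qed
  ultimately have EX: "expectation (\<lambda>\<omega>. X t \<omega> powr q) = q / Gamma (1-q) * V"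
    by simp
  have "q / Gamma (1-q) * V = t / (lam powr (q / \<alpha>) * Gamma (1 - q)) * Beta (1 - q / \<alpha>) (t + q / \<alpha>)"
  proof -
    have nz: "t \<notin> \<int>\<^sub>\<le>\<^sub>0" using t by (auto elim!: nonpos_Ints_cases)
    have "Gamma (1 - q/\<alpha> + (t + q/\<alpha>)) = t * Gamma t" using Gamma_plus1[of t] nz by (simp add: add.commute)
    moreover have "Gamma t > 0" using t by (simp add: Gamma_real_pos)
    ultimately show ?thesis using q G1 t lam
      by (simp add: V_def Beta_def powr_minus field_simps)
  qed
  thus ?thesis using INT EX by simp
qed

end
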